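(* Let $\Gamma=(V,m,\tau)$ be a weak $W$-graph and let $A\subseteq\Delta$. The following are equivalent: (1) there is some $v\in V$ with $\tau(v)=A$; (2) the operator $Q(\Delta\setminus A)R(A)$ is nonzero on $\mathbb{C}V$; (3) the trace of $Q(\Delta\setminus A)R(A)$ on $\mathbb{C}V$ is nonzero; (4) the trace of $R(A)Q(\Delta\setminus A)$ on $\mathbb{C}V$ is nonzero.
   Context: $W$ is a Weyl group with a fixed set $\Delta$ of simple roots; for a root $\alpha$, $s_\alpha$ is the reflection in the hyperplane orthogonal to $\alpha$, and $\operatorname{sgn}$ is the sign character of $W$. A weak $W$-graph is a triple $\Gamma=(V,m,\tau)$ where $V$ is a finite set, $m:V\times V\to\mathbb{C}$ is a map, and $\tau$ is a map from $V$ to the power set of $\Delta$, such that the linear maps $s_\alpha:\mathbb{C}V\to\mathbb{C}V$ ($\alpha\in\Delta$) given on basis vectors by $s_\alpha(v)=-v$ if $\alpha\in\tau(v)$ and $s_\alpha(v)=v-\sum_{u\in V,\ \alpha\in\tau(u)} m(u,v)u$ if $\alpha\notin\tau(v)$ define a representation of $W$ on $\mathbb{C}V$. For $B\subseteq\Delta$, $W(B)$ is the subgroup generated by $\{s_\alpha:\alpha\in B\}$, and $Q(B)=\frac{1}{|W(B)|}\sum_{g\in W(B)}g$, $R(B)=\frac{1}{|W(B)|}\sum_{g\in W(B)}\operatorname{sgn}(g)g$, elements of the group algebra $\mathbb{C}[W]$ acting on $\mathbb{C}V$. *)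

theory Defs
  imports "HOL-Analysis.Analysis"
begin

definition refl :: "real^'n \<Rightarrow> real^'n \<Rightarrow> real^'n" where
  "refl \<alpha> x = x - ((2 * (x \<bullet> \<alpha>)) / (\<alpha> \<bullet> \<alpha>)) *\<^sub>R \<alpha>"

definition root_system :: "(real^'n) set \<Rightarrow> bool" where
  "root_system \<Phi> \<longleftrightarrow> finite \<Phi> \<and> 0 \<notin> \<Phi> \<and>
     (\<forall>\<alpha>\<in>\<Phi>. \<forall>\<beta>\<in>\<Phi>. refl \<alpha> \<beta> \<in> \<Phi>) \<and>
     (\<forall>\<alpha>\<in>\<Phi>. \<forall>\<beta>\<in>\<Phi>. 2 * (\<beta> \<bullet> \<alpha>) / (\<alpha> \<bullet> \<alpha>) \<in> \<int>) \<and>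
     (\<forall>\<alpha>\<in>\<Phi>. \<forall>c::real. c *\<^sub>R \<alpha> \<in> \<Phi> \<longrightarrow> c = 1 \<or> c = -1)"

definition simple_system :: "(real^'n) set \<Rightarrow> (real^'n) set \<Rightarrow> bool" where
  "simple_system \<Phi> \<Delta> \<longleftrightarrow> \<Delta> \<subseteq> \<Phi> \<and> independent \<Delta> \<and>
     (\<forall>\<beta>\<in>\<Phi>. \<exists>c::real^'n \<Rightarrow> real. (\<forall>\<alpha>\<in>\<Delta>. c \<alpha> \<in> \<int>) \<and>
        ((\<forall>\<alpha>\<in>\<Delta>. c \<alpha> \<ge> 0) \<or> (\<forall>\<alpha>\<in>\<Delta>. c \<alpha> \<le> 0)) \<and>
        \<beta> = (\<Sum>\<alpha>\<in>\<Delta>. c \<alpha> *\<^sub>R \<alpha>))"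

text \<open>The subgroup of maps generated by the reflections in the vectors of S
  (reflections are involutions, so closure under composition suffices).\<close>
inductive_set refl_group :: "(real^'n) set \<Rightarrow> (real^'n \<Rightarrow> real^'n) set"
  for S :: "(real^'n) set" where
  id_in: "id \<in> refl_group S"
| step: "g \<in> refl_group S \<Longrightarrow> \<alpha> \<in> S \<Longrightarrow> refl \<alpha> \<circ> g \<in> refl_group S"

abbreviation weyl_group :: "(real^'n) set \<Rightarrow> (real^'n \<Rightarrow> real^'n) set" where
  "weyl_group \<Phi> \<equiv> refl_group \<Phi>"

abbreviation parabolic :: "(real^'n) set \<Rightarrow> (real^'n \<Rightarrow> real^'n) set" where
  "parabolic B \<equiv> refl_group B"

text \<open>The sign character of W (the determinant; equals -1 on every reflection).\<close>
definition sgnW :: "(real^'n \<Rightarrow> real^'n) \<Rightarrow> real" where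
  "sgnW g = det (matrix g)"

text \<open>An operator on CV is encoded by its matrix M, where M u v is the
  coefficient of basis vector u in the image of basis vector v (u, v in V).\<close>
definition mat_mult :: "'v set \<Rightarrow> ('v \<Rightarrow> 'v \<Rightarrow> complex) \<Rightarrow> ('v \<Rightarrow> 'v \<Rightarrow> complex)
    \<Rightarrow> ('v \<Rightarrow> 'v \<Rightarrow> complex)" where
  "mat_mult V M N = (\<lambda>u v. \<Sum>w\<in>V. M u w * N w v)"

definition mat_id :: "'v \<Rightarrow> 'v \<Rightarrow> complex" where
  "mat_id = (\<lambda>u v. if u = v then 1 else 0)"

definition mat_eq_on :: "'v set \<Rightarrow> ('v \<Rightarrow> 'v \<Rightarrow> complex) \<Rightarrow> ('v \<Rightarrow> 'v \<Rightarrow> complex) \<Rightarrow> bool" where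
  "mat_eq_on V M N \<longleftrightarrow> (\<forall>u\<in>V. \<forall>v\<in>V. M u v = N u v)"

definition mat_trace :: "'v set \<Rightarrow> ('v \<Rightarrow> 'v \<Rightarrow> complex) \<Rightarrow> complex" where
  "mat_trace V M = (\<Sum>v\<in>V. M v v)"

definition mat_nonzero :: "'v set \<Rightarrow> ('v \<Rightarrow> 'v \<Rightarrow> complex) \<Rightarrow> bool" where
  "mat_nonzero V M \<longleftrightarrow> (\<exists>u\<in>V. \<exists>v\<in>V. M u v \<noteq> 0)"

text \<open>Matrix of the operator s_alpha defined by the triple (V, m, tau):
  s_alpha(v) = -v if alpha in tau(v), and
  s_alpha(v) = v - sum over u in V with alpha in tau(u) of m(u,v) u otherwise.\<close>
definition wg_gen :: "('v \<Rightarrow> 'v \<Rightarrow> complex) \<Rightarrow> ('v \<Rightarrow> (real^'n) set) \<Rightarrow> real^'n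
    \<Rightarrow> ('v \<Rightarrow> 'v \<Rightarrow> complex)" where
  "wg_gen m \<tau> \<alpha> = (\<lambda>u v.
     if \<alpha> \<in> \<tau> v then (if u = v then -1 else 0)
     else (if u = v then 1 else 0) - (if \<alpha> \<in> \<tau> u then m u v else 0))"

definition wg_rep :: "(real^'n) set \<Rightarrow> (real^'n) set \<Rightarrow> 'v set \<Rightarrow> ('v \<Rightarrow> 'v \<Rightarrow> complex)
    \<Rightarrow> ('v \<Rightarrow> (real^'n) set) \<Rightarrow> ((real^'n \<Rightarrow> real^'n) \<Rightarrow> 'v \<Rightarrow> 'v \<Rightarrow> complex) \<Rightarrow> bool" where
  "wg_rep \<Phi> \<Delta> V m \<tau> \<rho> \<longleftrightarrow>
     mat_eq_on V (\<rho> id) mat_id \<and>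
     (\<forall>g\<in>weyl_group \<Phi>. \<forall>h\<in>weyl_group \<Phi>. mat_eq_on V (\<rho> (g \<circ> h)) (mat_mult V (\<rho> g) (\<rho> h))) \<and>
     (\<forall>\<alpha>\<in>\<Delta>. mat_eq_on V (\<rho> (refl \<alpha>)) (wg_gen m \<tau> \<alpha>))"

definition weak_W_graph :: "(real^'n) set \<Rightarrow> (real^'n) set \<Rightarrow> 'v set \<Rightarrow> ('v \<Rightarrow> 'v \<Rightarrow> complex)
    \<Rightarrow> ('v \<Rightarrow> (real^'n) set) \<Rightarrow> bool" where
  "weak_W_graph \<Phi> \<Delta> V m \<tau> \<longleftrightarrow> finite V \<and> (\<forall>v\<in>V. \<tau> v \<subseteq> \<Delta>) \<and> (\<exists>\<rho>. wg_rep \<Phi> \<Delta> V m \<tau> \<rho>)"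

definition Qop :: "((real^'n \<Rightarrow> real^'n) \<Rightarrow> 'v \<Rightarrow> 'v \<Rightarrow> complex) \<Rightarrow> (real^'n) set
    \<Rightarrow> ('v \<Rightarrow> 'v \<Rightarrow> complex)" where
  "Qop \<rho> B = (\<lambda>u v. (1 / of_nat (card (parabolic B))) * (\<Sum>g\<in>parabolic B. \<rho> g u v))"

definition Rop :: "((real^'n \<Rightarrow> real^'n) \<Rightarrow> 'v \<Rightarrow> 'v \<Rightarrow> complex) \<Rightarrow> (real^'n) set
    \<Rightarrow> ('v \<Rightarrow> 'v \<Rightarrow> complex)" where
  "Rop \<rho> B = (\<lambda>u v. (1 / of_nat (card (parabolic B))) *
                (\<Sum>g\<in>parabolic B. of_real (sgnW g) * \<rho> g u v))"

end

theory Submission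
  imports Defs
begin

lemma linear_refl: "linear (refl a)"
  unfolding refl_def
  by (rule linearI) (auto simp: inner_add_left inner_scaleR_left algebra_simps add_divide_distrib scaleR_add_left)

lemma refl_scale: "c \<noteq> 0 \<Longrightarrow> refl (c *\<^sub>R a) = refl a"
  unfolding refl_def by (rule ext) (simp add: inner_scaleR_right inner_scaleR_left)

lemma refl_orth:
  assumes "orthogonal_transformation f"
  shows "refl (f e) \<circ> f = f \<circ> refl e"
proof
  fix x
  have l: "linear f" using assms orthogonal_transformation by blast
  have ip: "\<And>v w. f v \<bullet> f w = v \<bullet> w" using assms orthogonal_transformation_def by blast
  show "(refl (f e) \<circ> f) x = (f \<circ> refl e) x"
    unfolding refl_def o_def using ip linear_diff[OF l] linear_scale[OF l] by simp
qed

lemma det_refl_axis: "det (matrix (refl (axis k (1::real)) :: real^'n \<Rightarrow> real^'n)) = -1"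
proof -
  have d: "(matrix (refl (axis k (1::real))) :: real^'n^'n) $ i $ j = (if i = j then (if i = k then -1 else 1) else 0)" for i j
    unfolding matrix_def refl_def by (simp add: inner_axis_axis; simp add: axis_def)
  have "det (matrix (refl (axis k (1::real))) :: real^'n^'n) = (\<Prod>i\<in>UNIV. if i = k then -1 else 1)"
    by (subst det_diagonal) (auto simp: d)
  also have "\<dots> = -1" by (simp add: prod.If_cases)
  finally show ?thesis .
qed

lemma det_refl: 
  fixes a :: "real^'n"
  assumes "a \<noteq> 0" shows "det (matrix (refl a)) = -1"
proof -
  obtain k :: 'n where True by blast
  let ?e = "norm a *\<^sub>R axis k (1::real)"
  obtain f where f: "orthogonal_transformation f" "f ?e = a"
    using orthogonal_transformation_exists[of ?e a] by auto
  have lf: "linear f" using f orthogonal_transformation by blast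
  have eq: "refl a \<circ> f = f \<circ> refl ?e" using refl_orth[OF f(1), of ?e] f(2) by simp
  have "matrix (refl a \<circ> f) = matrix (refl a) ** matrix f"
    by (rule matrix_compose[OF lf linear_refl])
  moreover have "matrix (f \<circ> refl ?e) = matrix f ** matrix (refl ?e)"
    by (rule matrix_compose[OF linear_refl lf])
  ultimately have "det (matrix (refl a)) * det (matrix f) = det (matrix f) * det (matrix (refl ?e))"
    using eq by (metis det_mul)
  moreover have "det (matrix f) \<noteq> 0" using orthogonal_transformation_det[OF f(1)] by auto
  moreover have "refl ?e = refl (axis k 1)" using assms by (simp add: refl_scale)
  ultimately have "det (matrix f) * det (matrix (refl a)) = det (matrix f) * (-1)"
    using det_refl_axis[of k] by (simp add: mult.commute)
  then show ?thesis using \<open>det (matrix f) \<noteq> 0\<close> by (metis mult_left_cancel)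
qed

lemma refl_group_mono: "g \<in> refl_group B \<Longrightarrow> B \<subseteq> C \<Longrightarrow> g \<in> refl_group C"
  by (induction g rule: refl_group.induct) (auto intro: refl_group.intros)

lemma refl_group_comp: "g \<in> refl_group S \<Longrightarrow> h \<in> refl_group S \<Longrightarrow> g \<circ> h \<in> refl_group S"
proof (induction g rule: refl_group.induct)
  case id_in then show ?case by simp
next
  case (step g a)
  have "refl a \<circ> (g \<circ> h) \<in> refl_group S" using refl_group.step[OF step.IH[OF step.prems] step.hyps(2)] .
  then show ?case by (simp only: o_assoc)
qed

lemma refl_invol: "a \<noteq> 0 \<Longrightarrow> refl a \<circ> refl a = id"
proof
  fix x assume a: "a \<noteq> 0"
  have aa: "a \<bullet> a \<noteq> 0" using a by simp
  show "(refl a \<circ> refl a) x = id x"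
    unfolding refl_def o_def using aa
    by (simp add: inner_diff_left inner_scaleR_left algebra_simps)
qed

lemma refl_group_inv:
  assumes "g \<in> refl_group S" "0 \<notin> S"
  shows "\<exists>g'\<in>refl_group S. g' \<circ> g = id \<and> g \<circ> g' = id"
  using assms
proof (induction g rule: refl_group.induct)
  case id_in then show ?case by (metis refl_group.id_in id_comp)
next
  case (step g a)
  then obtain g' where g': "g' \<in> refl_group S" "g' \<circ> g = id" "g \<circ> g' = id" by blast
  have a: "a \<noteq> 0" using step by auto
  have r: "refl a \<in> refl_group S" using refl_group.step[OF refl_group.id_in step(2)] by simp
  have "(g' \<circ> refl a) \<circ> (refl a \<circ> g) = id"
    by (metis g'(2) a refl_invol comp_assoc comp_id)
  moreover have "(refl a \<circ> g) \<circ> (g' \<circ> refl a) = id"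
    by (metis g'(3) a refl_invol comp_assoc comp_id)
  ultimately show ?case using refl_group_comp[OF g'(1) r] by blast
qed

lemma refl_group_linear: "g \<in> refl_group S \<Longrightarrow> linear g"
proof (induction g rule: refl_group.induct)
  case id_in then show ?case by (rule linear_id)
next
  case (step g a) then show ?case by (metis linear_compose linear_refl)
qed

lemma sgnW_id: "sgnW id = 1"
  unfolding sgnW_def by (simp add: matrix_id_mat_1)

lemma sgnW_step: "a \<noteq> 0 \<Longrightarrow> linear g \<Longrightarrow> sgnW (refl a \<circ> g) = - sgnW g"
  unfolding sgnW_def by (simp add: matrix_compose[OF _ linear_refl] det_mul det_refl)

lemma sgnW_pm: "g \<in> refl_group S \<Longrightarrow> 0 \<notin> S \<Longrightarrow> sgnW g = 1 \<or> sgnW g = -1"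
proof (induction g rule: refl_group.induct)
  case id_in
  have "sgnW (id :: real^'a \<Rightarrow> real^'a) = 1" by (rule sgnW_id)
  then show ?case unfolding id_def by simp
next
  case (step g a)
  have "a \<noteq> 0" using step by auto
  then have "sgnW (refl a \<circ> g) = - sgnW g" using sgnW_step refl_group_linear[OF step.hyps(1)] by blast
  then show ?case using step unfolding o_def by auto
qed

lemma refl_group_finite:
  assumes "root_system \<Phi>"
  shows "finite (refl_group \<Phi>)"
proof -
  have fin: "finite \<Phi>" using assms root_system_def by blast
  have perm: "g ` \<Phi> \<subseteq> \<Phi>" if "g \<in> refl_group \<Phi>" for g
    using that
  proof (induction g rule: refl_group.induct)
    case id_in then show ?case by simp
  next
    case (step g a)
    have "refl a y \<in> \<Phi>" if "y \<in> \<Phi>" for y using assms that step.hyps(2) unfolding root_system_def by blast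
    then show ?case using step.IH by (simp add: image_subset_iff)
  qed
  have fix_orth: "g z = z" if "g \<in> refl_group \<Phi>" "\<And>a. a \<in> \<Phi> \<Longrightarrow> z \<bullet> a = 0" for g z
    using that
  proof (induction g rule: refl_group.induct)
    case id_in then show ?case by simp
  next
    case (step g a) then show ?case by (simp add: refl_def)
  qed
  have inj: "inj_on (\<lambda>g. restrict g \<Phi>) (refl_group \<Phi>)"
  proof (rule inj_onI)
    fix g h assume g: "g \<in> refl_group \<Phi>" and h: "h \<in> refl_group \<Phi>" and eq: "restrict g \<Phi> = restrict h \<Phi>"
    have lg: "linear g" and lh: "linear h" using g h refl_group_linear by auto
    have on: "\<And>x. x \<in> \<Phi> \<Longrightarrow> g x = h x" using eq by (metis restrict_apply')
    show "g = h"
    proof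
      fix x
      obtain y z where yz: "y \<in> span \<Phi>" "\<And>w. w \<in> span \<Phi> \<Longrightarrow> orthogonal z w" "x = y + z"
        using orthogonal_subspace_decomp_exists[of \<Phi> x] by blast
      have "g y = h y" using linear_eq_on_span[OF lg lh] yz(1) on by blast
      moreover have "\<And>a. a \<in> \<Phi> \<Longrightarrow> z \<bullet> a = 0" using yz(2) span_base orthogonal_def by blast
      then have "g z = z" "h z = z" using fix_orth g h by auto
      ultimately show "g x = h x" using yz(3) linear_add[OF lg] linear_add[OF lh] by simp
    qed
  qed
  have "(\<lambda>g. restrict g \<Phi>) ` refl_group \<Phi> \<subseteq> (\<Pi>\<^sub>E a\<in>\<Phi>. \<Phi>)"
    using perm by (auto simp: PiE_iff image_subset_iff)
  moreover have "finite (\<Pi>\<^sub>E a\<in>\<Phi>. \<Phi>)" using fin by (simp add: finite_PiE)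
  ultimately show ?thesis using inj finite_imageD finite_subset by metis
qed

definition madj :: "('v \<Rightarrow> 'v \<Rightarrow> complex) \<Rightarrow> ('v \<Rightarrow> 'v \<Rightarrow> complex)" where
  "madj M = (\<lambda>u w. cnj (M w u))"
definition msum :: "'g set \<Rightarrow> ('g \<Rightarrow> 'v \<Rightarrow> 'v \<Rightarrow> complex) \<Rightarrow> ('v \<Rightarrow> 'v \<Rightarrow> complex)" where
  "msum P f = (\<lambda>u v. \<Sum>g\<in>P. f g u v)"
definition msc :: "complex \<Rightarrow> ('v \<Rightarrow> 'v \<Rightarrow> complex) \<Rightarrow> ('v \<Rightarrow> 'v \<Rightarrow> complex)" where
  "msc c M = (\<lambda>u v. c * M u v)"

lemma mm_assoc: "mat_mult V (mat_mult V A B) C = mat_mult V A (mat_mult V B C)"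
  unfolding mat_mult_def
  by (auto simp: sum_distrib_left sum_distrib_right mult.assoc intro!: ext sum.swap)

lemma meq_refl: "mat_eq_on V A A" by (simp add: mat_eq_on_def)
lemma meq_sym: "mat_eq_on V A B \<Longrightarrow> mat_eq_on V B A" by (simp add: mat_eq_on_def)
lemma meq_trans: "mat_eq_on V A B \<Longrightarrow> mat_eq_on V B C \<Longrightarrow> mat_eq_on V A C" by (simp add: mat_eq_on_def)

lemma mm_cong: "mat_eq_on V A A' \<Longrightarrow> mat_eq_on V B B' \<Longrightarrow> mat_eq_on V (mat_mult V A B) (mat_mult V A' B')"
  unfolding mat_eq_on_def mat_mult_def by (auto intro!: sum.cong)

lemma mm_cong_pt: "mat_eq_on V A A' \<Longrightarrow> mat_eq_on V B B' \<Longrightarrow> u \<in> V \<Longrightarrow> v \<in> V \<Longrightarrow> mat_mult V A B u v = mat_mult V A' B' u v"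
  using mm_cong unfolding mat_eq_on_def by blast

lemma mm_id_right: "finite V \<Longrightarrow> mat_eq_on V (mat_mult V A mat_id) A"
  unfolding mat_eq_on_def mat_mult_def mat_id_def by (auto simp: if_distrib cong: if_cong)

lemma mm_id_left: "finite V \<Longrightarrow> mat_eq_on V (mat_mult V mat_id A) A"
proof -
  assume "finite V"
  have "(\<Sum>w\<in>V. (if u = w then 1 else 0) * A w v) = A u v" if "u \<in> V" for u v
    using \<open>finite V\<close> that by (simp add: if_distrib[of "\<lambda>x. x * _"] cong: if_cong)
  then show ?thesis unfolding mat_eq_on_def mat_mult_def mat_id_def by auto
qed

lemma mm_sum_left: "mat_mult V (msum P f) B = msum P (\<lambda>g. mat_mult V (f g) B)"
  unfolding mat_mult_def msum_def by (auto simp: sum_distrib_right intro!: ext sum.swap)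

lemma mm_sum_right: "mat_mult V A (msum P f) = msum P (\<lambda>g. mat_mult V A (f g))"
  unfolding mat_mult_def msum_def by (auto simp: sum_distrib_left intro!: ext sum.swap)

lemma mm_sc_left: "mat_mult V (msc c A) B = msc c (mat_mult V A B)"
  unfolding mat_mult_def msc_def by (auto simp: sum_distrib_left mult.assoc)

lemma mm_sc_right: "mat_mult V A (msc c B) = msc c (mat_mult V A B)"
  unfolding mat_mult_def msc_def by (auto simp: sum_distrib_left mult.assoc mult.left_commute)

lemma madj_mm: "madj (mat_mult V A B) = mat_mult V (madj B) (madj A)"
  unfolding mat_mult_def madj_def by (auto simp: mult.commute)

lemma madj_sum: "madj (msum P f) = msum P (\<lambda>g. madj (f g))"
  unfolding madj_def msum_def by auto

lemma madj_sc: "madj (msc c A) = msc (cnj c) (madj A)"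
  unfolding madj_def msc_def by auto

lemma madj_madj: "madj (madj A) = A"
  unfolding madj_def by auto

lemma madj_cong: "mat_eq_on V A B \<Longrightarrow> mat_eq_on V (madj A) (madj B)"
  unfolding madj_def mat_eq_on_def by auto

lemma msum_cong: "(\<And>g. g \<in> P \<Longrightarrow> mat_eq_on V (f g) (h g)) \<Longrightarrow> mat_eq_on V (msum P f) (msum P h)"
  unfolding mat_eq_on_def msum_def by (auto intro!: sum.cong)

lemma msc_cong: "mat_eq_on V A B \<Longrightarrow> mat_eq_on V (msc c A) (msc c B)"
  unfolding mat_eq_on_def msc_def by auto

lemma msum_reindex: "bij_betw k P P' \<Longrightarrow> msum P' f = msum P (\<lambda>g. f (k g))"
  unfolding msum_def by (auto intro!: ext sum.reindex_bij_betw[symmetric])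

lemma trace_cyclic: "mat_trace V (mat_mult V A B) = mat_trace V (mat_mult V B A)"
  unfolding mat_trace_def mat_mult_def by (subst sum.swap) (simp add: mult.commute)

lemma trace_cong: "mat_eq_on V A B \<Longrightarrow> mat_trace V A = mat_trace V B"
  unfolding mat_trace_def mat_eq_on_def by auto

definition gip :: "'v set \<Rightarrow> ('v \<Rightarrow> 'v \<Rightarrow> complex) \<Rightarrow> ('v \<Rightarrow> complex) \<Rightarrow> ('v \<Rightarrow> complex) \<Rightarrow> complex" where
  "gip V H x y = (\<Sum>u\<in>V. \<Sum>w\<in>V. cnj (x u) * H u w * y w)"

lemma gip_add_right: "gip V H x (\<lambda>u. y u + z u) = gip V H x y + gip V H x z"
  unfolding gip_def by (simp add: distrib_left sum.distrib)

lemma gip_diff_right: "gip V H x (\<lambda>u. y u - z u) = gip V H x y - gip V H x z"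
  unfolding gip_def by (simp add: right_diff_distrib sum_subtractf)

lemma gip_scale_right: "gip V H x (\<lambda>u. c * y u) = c * gip V H x y"
  unfolding gip_def by (simp add: sum_distrib_left mult.left_commute)

lemma gip_scale_left: "gip V H (\<lambda>u. c * y u) x = cnj c * gip V H y x"
  unfolding gip_def by (simp add: sum_distrib_left mult.assoc)

lemma gip_sum_right: "gip V H x (\<lambda>u. \<Sum>j\<in>S. c j * y j u) = (\<Sum>j\<in>S. c j * gip V H x (y j))"
proof -
  have "gip V H x (\<lambda>u. \<Sum>j\<in>S. c j * y j u) = (\<Sum>u\<in>V. \<Sum>w\<in>V. \<Sum>j\<in>S. c j * (cnj (x u) * H u w * y j w))"
    unfolding gip_def by (simp add: sum_distrib_left mult.left_commute)
  also have "\<dots> = (\<Sum>j\<in>S. \<Sum>u\<in>V. \<Sum>w\<in>V. c j * (cnj (x u) * H u w * y j w))"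
  proof -
    have "\<And>u. (\<Sum>w\<in>V. \<Sum>j\<in>S. c j * (cnj (x u) * H u w * y j w)) = (\<Sum>j\<in>S. \<Sum>w\<in>V. c j * (cnj (x u) * H u w * y j w))"
      by (rule sum.swap)
    then have "(\<Sum>u\<in>V. \<Sum>w\<in>V. \<Sum>j\<in>S. c j * (cnj (x u) * H u w * y j w)) = (\<Sum>u\<in>V. \<Sum>j\<in>S. \<Sum>w\<in>V. c j * (cnj (x u) * H u w * y j w))"
      by simp
    also have "\<dots> = (\<Sum>j\<in>S. \<Sum>u\<in>V. \<Sum>w\<in>V. c j * (cnj (x u) * H u w * y j w))"
      by (rule sum.swap)
    finally show ?thesis .
  qed
  also have "\<dots> = (\<Sum>j\<in>S. c j * gip V H x (y j))"
    unfolding gip_def by (simp add: sum_distrib_left)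
  finally show ?thesis .
qed

lemma gip_cong: "(\<And>u. u \<in> V \<Longrightarrow> x u = x' u) \<Longrightarrow> (\<And>u. u \<in> V \<Longrightarrow> y u = y' u) \<Longrightarrow> gip V H x y = gip V H x' y'"
  unfolding gip_def by (auto intro!: sum.cong)

lemma gip_herm:
  assumes "\<And>u w. u \<in> V \<Longrightarrow> w \<in> V \<Longrightarrow> H w u = cnj (H u w)"
  shows "gip V H y x = cnj (gip V H x y)"
proof -
  have "gip V H y x = (\<Sum>u\<in>V. \<Sum>w\<in>V. cnj (y u) * H u w * x w)" by (simp add: gip_def)
  also have "\<dots> = (\<Sum>w\<in>V. \<Sum>u\<in>V. cnj (y u) * H u w * x w)" by (rule sum.swap)
  also have "\<dots> = (\<Sum>w\<in>V. \<Sum>u\<in>V. cnj (cnj (x w) * H w u * y u))"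
  proof (rule sum.cong[OF refl], rule sum.cong[OF refl])
    fix w u assume "w \<in> V" "u \<in> V"
    then have h: "H u w = cnj (H w u)" using assms by blast
    show "cnj (y u) * H u w * x w = cnj (cnj (x w) * H w u * y u)"
      by (simp add: h mult.commute mult.left_commute)
  qed
  also have "\<dots> = cnj (gip V H x y)" by (simp add: gip_def)
  finally show ?thesis .
qed

lemma frame_exists:
  assumes fin: "finite V"
    and herm: "\<And>u w. u \<in> V \<Longrightarrow> w \<in> V \<Longrightarrow> H w u = cnj (H u w)"
    and pos: "\<And>x. (\<exists>u\<in>V. x u \<noteq> 0) \<Longrightarrow> Im (gip V H x x) = 0 \<and> Re (gip V H x x) > 0"
  shows "\<exists>E. mat_eq_on V (mat_mult V E (mat_mult V (madj E) H)) mat_id"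
proof -
  have main: "S \<subseteq> V \<Longrightarrow> \<exists>E. (\<forall>u j. (u \<notin> S \<or> j \<notin> S) \<longrightarrow> E u j = 0)
      \<and> (\<forall>i\<in>S. \<forall>j\<in>S. gip V H (\<lambda>u. E u i) (\<lambda>u. E u j) = (if i = j then 1 else 0))
      \<and> (\<forall>x. (\<forall>u\<in>V - S. x u = 0) \<longrightarrow> (\<forall>u\<in>V. x u = (\<Sum>j\<in>S. gip V H (\<lambda>u. E u j) x * E u j)))"
    if "finite S" for S
    using that
  proof (induction S rule: finite_induct)
    case empty
    show ?case by (rule exI[of _ "\<lambda>u j. 0"]) auto
  next
    case (insert a S)
    have SV: "S \<subseteq> V" using insert.prems by simp
    obtain E where EE: "(\<forall>u j. (u \<notin> S \<or> j \<notin> S) \<longrightarrow> E u j = 0)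
      \<and> (\<forall>i\<in>S. \<forall>j\<in>S. gip V H (\<lambda>u. E u i) (\<lambda>u. E u j) = (if i = j then 1 else 0))
      \<and> (\<forall>x. (\<forall>u\<in>V - S. x u = 0) \<longrightarrow> (\<forall>u\<in>V. x u = (\<Sum>j\<in>S. gip V H (\<lambda>u. E u j) x * E u j)))"
      using insert.IH[OF SV] by (rule exE)
    have E0: "\<And>u j. (u \<notin> S \<or> j \<notin> S) \<Longrightarrow> E u j = 0" using EE by blast
    have Eon: "\<And>i j. i \<in> S \<Longrightarrow> j \<in> S \<Longrightarrow> gip V H (\<lambda>u. E u i) (\<lambda>u. E u j) = (if i = j then 1 else 0)"
      using EE by blast
    have Epar: "\<And>x u. (\<forall>u\<in>V - S. x u = 0) \<Longrightarrow> u \<in> V \<Longrightarrow> x u = (\<Sum>j\<in>S. gip V H (\<lambda>u. E u j) x * E u j)"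
      using EE by blast
    have aV: "a \<in> V" using insert by auto
    define col where "col j = (\<lambda>u. E u j)" for j
    define da where "da = (\<lambda>u. if u = a then (1::complex) else 0)"
    define c where "c j = gip V H (col j) da" for j
    define f where "f = (\<lambda>u. da u - (\<Sum>j\<in>S. c j * E u j))"
    have fa: "f a = 1" using insert E0 by (simp add: f_def da_def)
    define n where "n = gip V H f f"
    have ex: "\<exists>u\<in>V. f u \<noteq> 0" using fa aV by force
    have npos': "Im n = 0 \<and> Re n > 0" using pos[OF ex] unfolding n_def .
    have npos: "Im n = 0" "Re n > 0" using npos' by auto
    define s where "s = sqrt (Re n)"
    have spos: "s > 0" using npos by (simp add: s_def)
    have ns: "n = complex_of_real (s * s)" using npos by (simp add: s_def complex_eq_iff)
    define e where "e = (\<lambda>u. complex_of_real (1 / s) * f u)"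
    define E' where "E' = (\<lambda>u j. if j = a then e u else E u j)"
    have herm': "\<And>x y. gip V H y x = cnj (gip V H x y)" using gip_herm herm by blast
    have f_eq: "f = (\<lambda>u. da u - (\<Sum>j\<in>S. c j * col j u))" by (simp add: f_def col_def)
    have col_f: "gip V H (col i) f = 0" if "i \<in> S" for i
    proof -
      have "gip V H (col i) f = c i - (\<Sum>j\<in>S. c j * gip V H (col i) (col j))"
        unfolding f_eq by (simp add: gip_diff_right gip_sum_right c_def)
      also have "\<dots> = c i - (\<Sum>j\<in>S. if i = j then c j else 0)"
        using Eon that by (auto intro!: sum.cong simp: col_def)
      also have "\<dots> = 0" using that insert by simp
      finally show ?thesis .
    qed
    have f_col: "gip V H f (col i) = 0" if "i \<in> S" for i
      using col_f[OF that] herm' by (metis complex_cnj_zero)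
    have col_e: "gip V H (col i) e = 0" if "i \<in> S" for i
      unfolding e_def gip_scale_right using col_f[OF that] by simp
    have e_col: "gip V H e (col i) = 0" if "i \<in> S" for i
      unfolding e_def gip_scale_left using f_col[OF that] by simp
    have e_e: "gip V H e e = 1"
      unfolding e_def gip_scale_left gip_scale_right n_def[symmetric] ns using spos by simp
    show ?case
    proof (rule exI[of _ E'], intro conjI allI impI ballI)
      fix u j assume "u \<notin> insert a S \<or> j \<notin> insert a S"
      then show "E' u j = 0"
      proof
        assume u: "u \<notin> insert a S"
        then have "f u = 0" using E0 by (simp add: f_def da_def)
        then show ?thesis using u E0 by (simp add: E'_def e_def)
      next
        assume "j \<notin> insert a S" then show ?thesis using E0 by (simp add: E'_def)
      qed
    next
      fix i j assume ij: "i \<in> insert a S" "j \<in> insert a S"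
      have ca: "(\<lambda>u. E' u a) = e" by (simp add: E'_def)
      have cj: "(\<lambda>u. E' u j) = col j" if "j \<in> S" for j using that insert by (auto simp: E'_def col_def)
      show "gip V H (\<lambda>u. E' u i) (\<lambda>u. E' u j) = (if i = j then 1 else 0)"
        using ij insert(2) col_e e_col Eon by (auto simp: ca cj e_e col_def)
    next
      fix x :: "_ \<Rightarrow> complex" and u assume xs: "\<forall>u\<in>V - insert a S. x u = 0" and uV: "u \<in> V"
      define xS where "xS = (\<lambda>u. x u - x a * da u)"
      have xS0: "\<forall>u\<in>V - S. xS u = 0" using xs by (auto simp: xS_def da_def)
      have parS: "\<And>u. u \<in> V \<Longrightarrow> xS u = (\<Sum>j\<in>S. gip V H (col j) xS * col j u)"
        using Epar[OF xS0] by (simp add: col_def)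
      have x_eq: "\<And>u. x u = xS u + x a * da u" by (simp add: xS_def)
      have xfun: "x = (\<lambda>u. xS u + x a * da u)" by (simp add: xS_def)
      have gcx: "gip V H (col j) x = gip V H (col j) xS + x a * c j" for j
        by (subst xfun) (simp only: gip_add_right gip_scale_right c_def)
      have gfxS: "gip V H f xS = 0"
      proof -
        have "gip V H f xS = gip V H f (\<lambda>u. \<Sum>j\<in>S. gip V H (col j) xS * col j u)"
          by (rule gip_cong) (auto simp: parS)
        also have "\<dots> = 0" by (simp add: gip_sum_right f_col)
        finally show ?thesis .
      qed
      have gfda: "gip V H f da = n"
      proof -
        have "gip V H f da = gip V H f (\<lambda>u. f u + (\<Sum>j\<in>S. c j * col j u))"
          by (rule gip_cong) (auto simp: f_eq)
        also have "\<dots> = n" by (simp add: gip_add_right gip_sum_right f_col n_def)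
        finally show ?thesis .
      qed
      have gfx: "gip V H f x = x a * n"
      proof -
        have "gip V H f x = gip V H f (\<lambda>u. xS u + x a * da u)" by (subst xfun) (rule refl)
        also have "\<dots> = x a * n" by (simp add: gip_add_right gip_scale_right gfxS gfda)
        finally show ?thesis .
      qed
      have "(\<Sum>j\<in>insert a S. gip V H (\<lambda>u. E' u j) x * E' u j)
          = gip V H e x * e u + (\<Sum>j\<in>S. gip V H (col j) x * col j u)"
        using insert(1,2) by (auto simp: E'_def col_def intro!: sum.cong)
      also have "gip V H e x * e u = x a * f u"
        unfolding e_def gip_scale_left gfx ns using spos by simp
      also have "(\<Sum>j\<in>S. gip V H (col j) x * col j u) = (\<Sum>j\<in>S. gip V H (col j) xS * col j u) + x a * (\<Sum>j\<in>S. c j * col j u)"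
        by (simp add: gcx distrib_right sum.distrib sum_distrib_left mult.assoc)
      also have "\<dots> = xS u + x a * (da u - f u)" using parS[OF uV] by (simp add: f_eq)
      finally show "x u = (\<Sum>j\<in>insert a S. gip V H (\<lambda>u. E' u j) x * E' u j)"
        using x_eq[of u] by (simp add: algebra_simps)
    qed
  qed
  obtain E where EE: "(\<forall>u j. (u \<notin> V \<or> j \<notin> V) \<longrightarrow> E u j = 0)
      \<and> (\<forall>i\<in>V. \<forall>j\<in>V. gip V H (\<lambda>u. E u i) (\<lambda>u. E u j) = (if i = j then 1 else 0))
      \<and> (\<forall>x. (\<forall>u\<in>V - V. x u = 0) \<longrightarrow> (\<forall>u\<in>V. x u = (\<Sum>j\<in>V. gip V H (\<lambda>u. E u j) x * E u j)))"
    using main[OF fin order_refl] by (rule exE)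
  have Epar: "\<And>x u. u \<in> V \<Longrightarrow> x u = (\<Sum>j\<in>V. gip V H (\<lambda>u. E u j) x * E u j)"
    using EE by simp
  show ?thesis
  proof (rule exI[of _ E], unfold mat_eq_on_def, intro ballI)
    fix u v assume uv: "u \<in> V" "v \<in> V"
    have "mat_id u v = (\<Sum>j\<in>V. gip V H (\<lambda>u. E u j) (\<lambda>w. mat_id w v) * E u j)"
      using Epar[of u "\<lambda>w. mat_id w v"] uv by simp
    also have "\<dots> = mat_mult V E (mat_mult V (madj E) H) u v"
    proof -
      have "gip V H (\<lambda>u. E u j) (\<lambda>w. mat_id w v) = mat_mult V (madj E) H j v" for j
      proof -
        have "gip V H (\<lambda>u. E u j) (\<lambda>w. mat_id w v) = (\<Sum>u'\<in>V. \<Sum>w\<in>V. if w = v then cnj (E u' j) * H u' w else 0)"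
          unfolding gip_def mat_id_def by (auto intro!: sum.cong)
        also have "\<dots> = (\<Sum>u'\<in>V. cnj (E u' j) * H u' v)"
          using fin uv by simp
        finally show ?thesis by (simp add: mat_mult_def madj_def)
      qed
      then show ?thesis by (simp add: mat_mult_def mult.commute)
    qed
    finally show "mat_mult V E (mat_mult V (madj E) H) u v = mat_id u v" by simp
  qed
qed

lemma refl_in: "a \<in> S \<Longrightarrow> refl a \<in> refl_group S"
  using refl_group.step[OF refl_group.id_in, of a S] by simp

lemma sgnW_comp: "linear f \<Longrightarrow> linear g \<Longrightarrow> sgnW (f \<circ> g) = sgnW f * sgnW g"
  unfolding sgnW_def by (simp add: matrix_compose det_mul)

lemma gen_row: "\<beta> \<notin> \<tau> v \<Longrightarrow> wg_gen m \<tau> \<beta> v w = mat_id v w"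
  unfolding wg_gen_def mat_id_def by auto

lemma gen_col: "\<beta> \<in> \<tau> w \<Longrightarrow> wg_gen m \<tau> \<beta> x w = - mat_id x w"
  unfolding wg_gen_def mat_id_def by auto

lemma mm_row_id: "finite V \<Longrightarrow> v \<in> V \<Longrightarrow> (\<And>w. w \<in> V \<Longrightarrow> A v w = mat_id v w) \<Longrightarrow> mat_mult V A B v u = B v u"
  unfolding mat_mult_def mat_id_def by (simp add: if_distrib[of "\<lambda>x. x * _"] cong: sum.cong if_cong)

lemma mm_col_neg:
  assumes fin: "finite V" and w: "w \<in> V" and B: "\<And>x. x \<in> V \<Longrightarrow> B x w = - mat_id x w"
  shows "mat_mult V A B u w = - A u w"
proof -
  have "mat_mult V A B u w = (\<Sum>x\<in>V. - (if x = w then A u x else 0))"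
    unfolding mat_mult_def using B by (intro sum.cong) (auto simp: mat_id_def)
  also have "\<dots> = - (\<Sum>x\<in>V. if x = w then A u x else 0)" by (rule sum_negf)
  also have "\<dots> = - A u w" using fin w by simp
  finally show ?thesis .
qed

locale wgl =
  fixes \<Phi> \<Delta> :: "(real^'n) set" and V :: "'v set" and m :: "'v \<Rightarrow> 'v \<Rightarrow> complex"
    and \<tau> :: "'v \<Rightarrow> (real^'n) set" and \<rho> :: "(real^'n \<Rightarrow> real^'n) \<Rightarrow> 'v \<Rightarrow> 'v \<Rightarrow> complex"
  assumes rs: "root_system \<Phi>" and ss: "simple_system \<Phi> \<Delta>" and finV: "finite V"
    and tauD: "\<And>v. v \<in> V \<Longrightarrow> \<tau> v \<subseteq> \<Delta>" and rep: "wg_rep \<Phi> \<Delta> V m \<tau> \<rho>"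
begin

lemma DPhi: "\<Delta> \<subseteq> \<Phi>" using ss unfolding simple_system_def by (elim conjE)
lemma zPhi: "0 \<notin> \<Phi>" using rs unfolding root_system_def by (elim conjE)
lemma zB: "B \<subseteq> \<Delta> \<Longrightarrow> 0 \<notin> B" using DPhi zPhi by blast

lemma PW: "B \<subseteq> \<Delta> \<Longrightarrow> g \<in> refl_group B \<Longrightarrow> g \<in> refl_group \<Phi>"
  using refl_group_mono DPhi by blast

lemma finP: "B \<subseteq> \<Delta> \<Longrightarrow> finite (refl_group B)"
  using refl_group_finite[OF rs] PW by (meson finite_subset subsetI)

lemma cardP: "B \<subseteq> \<Delta> \<Longrightarrow> card (refl_group B) > 0"
  using finP refl_group.id_in card_gt_0_iff by blast

lemma rho_id: "mat_eq_on V (\<rho> id) mat_id" using rep unfolding wg_rep_def by (elim conjE)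
lemma rho_comp: "g \<in> refl_group \<Phi> \<Longrightarrow> h \<in> refl_group \<Phi> \<Longrightarrow> mat_eq_on V (\<rho> (g \<circ> h)) (mat_mult V (\<rho> g) (\<rho> h))"
  using rep unfolding wg_rep_def by (elim conjE) blast
lemma rho_gen: "a \<in> \<Delta> \<Longrightarrow> mat_eq_on V (\<rho> (refl a)) (wg_gen m \<tau> a)"
  using rep unfolding wg_rep_def by (elim conjE) blast

lemma rho_step: "a \<in> \<Delta> \<Longrightarrow> g \<in> refl_group \<Phi> \<Longrightarrow> mat_eq_on V (\<rho> (refl a \<circ> g)) (mat_mult V (wg_gen m \<tau> a) (\<rho> g))"
  using rho_comp[of "refl a" g] rho_gen[of a] refl_in[of a \<Phi>] DPhi
  by (meson meq_trans mm_cong meq_refl subsetD)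

lemma inv_props:
  assumes "B \<subseteq> \<Delta>" "g \<in> refl_group B"
  shows "inv g \<in> refl_group B" "inv g \<circ> g = id" "g \<circ> inv g = id"
proof -
  obtain g' where g': "g' \<in> refl_group B" "g' \<circ> g = id" "g \<circ> g' = id"
    using refl_group_inv[OF assms(2) zB[OF assms(1)]] by blast
  have "inv g = g'" using g' inv_unique_comp by blast
  then show "inv g \<in> refl_group B" "inv g \<circ> g = id" "g \<circ> inv g = id" using g' by auto
qed

lemma inv_inv_P: "B \<subseteq> \<Delta> \<Longrightarrow> g \<in> refl_group B \<Longrightarrow> inv (inv g) = g"
  using inv_props inv_unique_comp by metis

lemma bij_left: "B \<subseteq> \<Delta> \<Longrightarrow> h \<in> refl_group B \<Longrightarrow> bij_betw (\<lambda>g. h \<circ> g) (refl_group B) (refl_group B)"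
  apply (rule bij_betw_byWitness[where f' = "\<lambda>g. inv h \<circ> g"])
  using inv_props[of B h] refl_group_comp
  by (auto simp: comp_assoc[symmetric])

lemma bij_right: "B \<subseteq> \<Delta> \<Longrightarrow> h \<in> refl_group B \<Longrightarrow> bij_betw (\<lambda>g. g \<circ> h) (refl_group B) (refl_group B)"
  apply (rule bij_betw_byWitness[where f' = "\<lambda>g. g \<circ> inv h"])
  using inv_props[of B h] refl_group_comp
  by (auto simp: comp_assoc)

lemma bij_inv: "B \<subseteq> \<Delta> \<Longrightarrow> bij_betw inv (refl_group B) (refl_group B)"
proof -
  assume B: "B \<subseteq> \<Delta>"
  show ?thesis
  proof (rule bij_betw_byWitness[where f' = inv])
    show "\<forall>a\<in>refl_group B. inv (inv a) = a" using inv_inv_P[OF B] by blast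
    show "\<forall>a\<in>refl_group B. inv (inv a) = a" using inv_inv_P[OF B] by blast
    show "inv ` refl_group B \<subseteq> refl_group B" using inv_props(1)[OF B] by blast
    show "inv ` refl_group B \<subseteq> refl_group B" using inv_props(1)[OF B] by blast
  qed
qed

lemma sgn_pm: "B \<subseteq> \<Delta> \<Longrightarrow> g \<in> refl_group B \<Longrightarrow> sgnW g = 1 \<or> sgnW g = -1"
  by (rule sgnW_pm[OF _ zB])

lemma sgn_sq: "B \<subseteq> \<Delta> \<Longrightarrow> g \<in> refl_group B \<Longrightarrow> sgnW g * sgnW g = 1"
proof -
  assume "B \<subseteq> \<Delta>" "g \<in> refl_group B"
  then have "sgnW g = 1 \<or> sgnW g = -1" by (rule sgn_pm)
  then show ?thesis by (elim disjE) simp_all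
qed

lemma sgn_inv: "B \<subseteq> \<Delta> \<Longrightarrow> g \<in> refl_group B \<Longrightarrow> sgnW (inv g) = sgnW g"
proof -
  assume B: "B \<subseteq> \<Delta>" and g: "g \<in> refl_group B"
  have "sgnW (inv g \<circ> g) = sgnW (inv g) * sgnW g"
    using sgnW_comp refl_group_linear inv_props[OF B g] g by blast
  moreover have "sgnW (id :: real^'n \<Rightarrow> real^'n) = 1" by (rule sgnW_id)
  ultimately have "sgnW (inv g) * sgnW g = 1" using inv_props(2)[OF B g] by simp
  moreover have "sgnW g = 1 \<or> sgnW g = -1" using sgn_pm[OF B g] .
  moreover have "sgnW (inv g) = 1 \<or> sgnW (inv g) = -1" using sgn_pm[OF B inv_props(1)[OF B g]] .
  ultimately show ?thesis by auto
qed

lemma sgn_refl: "a \<in> \<Delta> \<Longrightarrow> sgnW (refl a) = -1"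
  unfolding sgnW_def using det_refl zB[of "{a}"] by auto

end

context wgl begin

lemma Qform: "Qop \<rho> B = msc (1 / of_nat (card (refl_group B))) (msum (refl_group B) \<rho>)"
  unfolding Qop_def msc_def msum_def by simp

lemma Rform: "Rop \<rho> B = msc (1 / of_nat (card (refl_group B))) (msum (refl_group B) (\<lambda>g. msc (of_real (sgnW g)) (\<rho> g)))"
  unfolding Rop_def msc_def msum_def by simp

lemma rho_col:
  assumes A: "A \<subseteq> \<Delta>" and g: "g \<in> refl_group A" and v: "v \<in> V" "A \<subseteq> \<tau> v"
  shows "u \<in> V \<Longrightarrow> \<rho> g u v = of_real (sgnW g) * mat_id u v"
  using g
proof (induction g arbitrary: u rule: refl_group.induct)
  case id_in
  have "sgnW (id :: real^'n \<Rightarrow> real^'n) = 1" by (rule sgnW_id)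
  then show ?case using rho_id id_in v unfolding mat_eq_on_def id_def by simp
next
  case (step g a)
  have aD: "a \<in> \<Delta>" using step A by auto
  have gW: "g \<in> refl_group \<Phi>" using PW[OF A step.hyps(1)] .
  have "\<rho> (refl a \<circ> g) u v = mat_mult V (wg_gen m \<tau> a) (\<rho> g) u v"
    using rho_step[OF aD gW] step.prems v unfolding mat_eq_on_def by blast
  also have "\<dots> = (\<Sum>w\<in>V. wg_gen m \<tau> a u w * (of_real (sgnW g) * mat_id w v))"
    unfolding mat_mult_def using step.IH by (intro sum.cong) auto
  also have "\<dots> = wg_gen m \<tau> a u v * of_real (sgnW g)"
    using finV v by (simp add: mat_id_def if_distrib[of "\<lambda>x. _ * x"] cong: if_cong)
  also have "\<dots> = - mat_id u v * of_real (sgnW g)"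
    using gen_col[of a \<tau> v m u] step.hyps(2) v by auto
  also have "\<dots> = of_real (sgnW (refl a \<circ> g)) * mat_id u v"
  proof -
    have "a \<noteq> 0" using zB[OF A] step.hyps(2) by blast
    then have "sgnW (refl a \<circ> g) = - sgnW g" using sgnW_step refl_group_linear[OF step.hyps(1)] by blast
    then show ?thesis by simp
  qed
  finally show ?case .
qed

lemma rho_row:
  assumes K: "K \<subseteq> \<Delta>" and g: "g \<in> refl_group K" and v: "v \<in> V" "\<tau> v \<inter> K = {}"
  shows "u \<in> V \<Longrightarrow> \<rho> g v u = mat_id v u"
  using g
proof (induction g arbitrary: u rule: refl_group.induct)
  case id_in
  then show ?case using rho_id v unfolding mat_eq_on_def id_def by simp
next
  case (step g a)
  have aD: "a \<in> \<Delta>" using step K by auto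
  have gW: "g \<in> refl_group \<Phi>" using PW[OF K step.hyps(1)] .
  have an: "a \<notin> \<tau> v" using v step.hyps(2) by auto
  have "\<rho> (refl a \<circ> g) v u = mat_mult V (wg_gen m \<tau> a) (\<rho> g) v u"
    using rho_step[OF aD gW] step.prems v unfolding mat_eq_on_def by blast
  also have "\<dots> = \<rho> g v u"
    by (rule mm_row_id[OF finV v(1)]) (simp add: gen_row[where \<beta>=a and \<tau>=\<tau> and v=v, OF an])
  also have "\<dots> = mat_id v u" using step.IH step.prems by blast
  finally show ?case .
qed

lemma R_id:
  assumes A: "A \<subseteq> \<Delta>" and v: "v \<in> V" "A \<subseteq> \<tau> v" and u: "u \<in> V"
  shows "Rop \<rho> A u v = mat_id u v"
proof -
  have "(\<Sum>g\<in>refl_group A. of_real (sgnW g) * \<rho> g u v) = (\<Sum>g\<in>refl_group A. mat_id u v)"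
  proof (rule sum.cong[OF refl])
    fix g assume g: "g \<in> refl_group A"
    have "of_real (sgnW g) * \<rho> g u v = of_real (sgnW g * sgnW g) * mat_id u v"
      using rho_col[OF A g v u] by simp
    then show "of_real (sgnW g) * \<rho> g u v = mat_id u v" using sgn_sq[OF A g] by simp
  qed
  then show ?thesis unfolding Rop_def using cardP[OF A] by simp
qed

lemma Q_id:
  assumes K: "K \<subseteq> \<Delta>" and v: "v \<in> V" "\<tau> v \<inter> K = {}" and u: "u \<in> V"
  shows "Qop \<rho> K v u = mat_id v u"
proof -
  have "(\<Sum>g\<in>refl_group K. \<rho> g v u) = (\<Sum>g\<in>refl_group K. mat_id v u)"
    using rho_row[OF K _ v u] by (intro sum.cong) auto
  then show ?thesis unfolding Qop_def using cardP[OF K] by simp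
qed

lemma Q_right:
  assumes B: "B \<subseteq> \<Delta>" and h: "h \<in> refl_group B"
  shows "mat_eq_on V (mat_mult V (Qop \<rho> B) (\<rho> h)) (Qop \<rho> B)"
proof -
  let ?P = "refl_group B" and ?c = "1 / of_nat (card (refl_group B)) :: complex"
  have "mat_mult V (Qop \<rho> B) (\<rho> h) = msc ?c (msum ?P (\<lambda>g. mat_mult V (\<rho> g) (\<rho> h)))"
    unfolding Qform mm_sc_left mm_sum_left ..
  moreover have "mat_eq_on V (msc ?c (msum ?P (\<lambda>g. mat_mult V (\<rho> g) (\<rho> h)))) (msc ?c (msum ?P (\<lambda>g. \<rho> (g \<circ> h))))"
    by (intro msc_cong msum_cong meq_sym[OF rho_comp] PW[OF B] h)
  moreover have "msum ?P (\<lambda>g. \<rho> (g \<circ> h)) = msum ?P \<rho>"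
    using msum_reindex[OF bij_right[OF B h], of \<rho>] by simp
  ultimately show ?thesis unfolding Qform by (metis meq_trans meq_refl)
qed

lemma Q_left:
  assumes B: "B \<subseteq> \<Delta>" and h: "h \<in> refl_group B"
  shows "mat_eq_on V (mat_mult V (\<rho> h) (Qop \<rho> B)) (Qop \<rho> B)"
proof -
  let ?P = "refl_group B" and ?c = "1 / of_nat (card (refl_group B)) :: complex"
  have "mat_mult V (\<rho> h) (Qop \<rho> B) = msc ?c (msum ?P (\<lambda>g. mat_mult V (\<rho> h) (\<rho> g)))"
    unfolding Qform mm_sc_right mm_sum_right ..
  moreover have "mat_eq_on V (msc ?c (msum ?P (\<lambda>g. mat_mult V (\<rho> h) (\<rho> g)))) (msc ?c (msum ?P (\<lambda>g. \<rho> (h \<circ> g))))"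
    by (intro msc_cong msum_cong meq_sym[OF rho_comp] PW[OF B] h)
  moreover have "msum ?P (\<lambda>g. \<rho> (h \<circ> g)) = msum ?P \<rho>"
    using msum_reindex[OF bij_left[OF B h], of \<rho>] by simp
  ultimately show ?thesis unfolding Qform by (metis meq_trans meq_refl)
qed

lemma R_left:
  assumes B: "B \<subseteq> \<Delta>" and h: "h \<in> refl_group B"
  shows "mat_eq_on V (mat_mult V (\<rho> h) (Rop \<rho> B)) (msc (of_real (sgnW h)) (Rop \<rho> B))"
proof -
  let ?P = "refl_group B" and ?c = "1 / of_nat (card (refl_group B)) :: complex"
  let ?s = "\<lambda>g. complex_of_real (sgnW g)"
  have f1: "mat_mult V (\<rho> h) (Rop \<rho> B) = msc ?c (msum ?P (\<lambda>g. msc (?s g) (mat_mult V (\<rho> h) (\<rho> g))))"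
    unfolding Rform mm_sc_right mm_sum_right ..
  have f2: "mat_eq_on V (msc ?c (msum ?P (\<lambda>g. msc (?s g) (mat_mult V (\<rho> h) (\<rho> g))))) (msc ?c (msum ?P (\<lambda>g. msc (?s g) (\<rho> (h \<circ> g)))))"
    by (intro msc_cong msum_cong meq_sym[OF rho_comp] PW[OF B] h)
  have f3: "msum ?P (\<lambda>g. msc (?s g) (\<rho> g)) = msum ?P (\<lambda>g. msc (?s (h \<circ> g)) (\<rho> (h \<circ> g)))"
    using msum_reindex[OF bij_left[OF B h], of "\<lambda>g. msc (?s g) (\<rho> g)"] by simp
  have f4: "msc ?c (msum ?P (\<lambda>g. msc (?s g) (\<rho> (h \<circ> g)))) = msc (?s h) (msc ?c (msum ?P (\<lambda>g. msc (?s (h \<circ> g)) (\<rho> (h \<circ> g)))))"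
  proof -
    have "?s g = ?s h * ?s (h \<circ> g)" if g: "g \<in> ?P" for g
    proof -
      have "sgnW (h \<circ> g) = sgnW h * sgnW g"
        using sgnW_comp refl_group_linear h g by blast
      then have "sgnW h * sgnW (h \<circ> g) = sgnW h * sgnW h * sgnW g" by simp
      then show ?thesis using sgn_sq[OF B h] by (simp flip: of_real_mult)
    qed
    then show ?thesis unfolding msc_def msum_def
      by (auto intro!: ext simp: sum_distrib_left mult.assoc mult.left_commute intro: sum.cong)
  qed
  have e: "msc (?s h) (Rop \<rho> B) = msc ?c (msum ?P (\<lambda>g. msc (?s g) (\<rho> (h \<circ> g))))"
    unfolding Rform f3 f4 ..
  show ?thesis unfolding e using f1 f2 by simp
qed

end

context wgl begin

lemma R_right:
  assumes B: "B \<subseteq> \<Delta>" and h: "h \<in> refl_group B"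
  shows "mat_eq_on V (mat_mult V (Rop \<rho> B) (\<rho> h)) (msc (of_real (sgnW h)) (Rop \<rho> B))"
proof -
  let ?P = "refl_group B" and ?c = "1 / of_nat (card (refl_group B)) :: complex"
  let ?s = "\<lambda>g. complex_of_real (sgnW g)"
  have f1: "mat_mult V (Rop \<rho> B) (\<rho> h) = msc ?c (msum ?P (\<lambda>g. msc (?s g) (mat_mult V (\<rho> g) (\<rho> h))))"
    unfolding Rform mm_sc_left mm_sum_left ..
  have f2: "mat_eq_on V (msc ?c (msum ?P (\<lambda>g. msc (?s g) (mat_mult V (\<rho> g) (\<rho> h))))) (msc ?c (msum ?P (\<lambda>g. msc (?s g) (\<rho> (g \<circ> h)))))"
    by (intro msc_cong msum_cong meq_sym[OF rho_comp] PW[OF B] h)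
  have f3: "msum ?P (\<lambda>g. msc (?s g) (\<rho> g)) = msum ?P (\<lambda>g. msc (?s (g \<circ> h)) (\<rho> (g \<circ> h)))"
    using msum_reindex[OF bij_right[OF B h], of "\<lambda>g. msc (?s g) (\<rho> g)"] by simp
  have f4: "msc ?c (msum ?P (\<lambda>g. msc (?s g) (\<rho> (g \<circ> h)))) = msc (?s h) (msc ?c (msum ?P (\<lambda>g. msc (?s (g \<circ> h)) (\<rho> (g \<circ> h)))))"
  proof -
    have "?s g = ?s h * ?s (g \<circ> h)" if g: "g \<in> ?P" for g
    proof -
      have "sgnW (g \<circ> h) = sgnW g * sgnW h"
        using sgnW_comp refl_group_linear h g by blast
      then have "sgnW h * sgnW (g \<circ> h) = sgnW h * sgnW h * sgnW g" by simp
      then show ?thesis using sgn_sq[OF B h] by (simp flip: of_real_mult)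
    qed
    then show ?thesis unfolding msc_def msum_def
      by (auto intro!: ext simp: sum_distrib_left mult.assoc mult.left_commute intro: sum.cong)
  qed
  have e: "msc (?s h) (Rop \<rho> B) = msc ?c (msum ?P (\<lambda>g. msc (?s g) (\<rho> (g \<circ> h))))"
    unfolding Rform f3 f4 ..
  show ?thesis unfolding e using f1 f2 by simp
qed

lemma Q_idem:
  assumes B: "B \<subseteq> \<Delta>"
  shows "mat_eq_on V (mat_mult V (Qop \<rho> B) (Qop \<rho> B)) (Qop \<rho> B)"
proof -
  let ?P = "refl_group B" and ?c = "1 / of_nat (card (refl_group B)) :: complex"
  have f1: "\<And>X. mat_mult V X (Qop \<rho> B) = msc ?c (msum ?P (\<lambda>g. mat_mult V X (\<rho> g)))"
    unfolding Qform mm_sc_right mm_sum_right ..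
  have f2: "mat_eq_on V (msc ?c (msum ?P (\<lambda>g. mat_mult V (Qop \<rho> B) (\<rho> g)))) (msc ?c (msum ?P (\<lambda>g. Qop \<rho> B)))"
    by (intro msc_cong msum_cong Q_right[OF B])
  have f3: "msc ?c (msum ?P (\<lambda>g. Qop \<rho> B)) = Qop \<rho> B"
    unfolding msc_def msum_def using cardP[OF B] by (auto intro!: ext)
  show ?thesis using f1 f2 f3 by simp
qed

lemma R_idem:
  assumes B: "B \<subseteq> \<Delta>"
  shows "mat_eq_on V (mat_mult V (Rop \<rho> B) (Rop \<rho> B)) (Rop \<rho> B)"
proof -
  let ?P = "refl_group B" and ?c = "1 / of_nat (card (refl_group B)) :: complex"
  let ?s = "\<lambda>g. complex_of_real (sgnW g)"
  have f1: "\<And>X. mat_mult V X (Rop \<rho> B) = msc ?c (msum ?P (\<lambda>g. msc (?s g) (mat_mult V X (\<rho> g))))"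
    unfolding Rform mm_sc_right mm_sum_right ..
  have f2: "mat_eq_on V (msc ?c (msum ?P (\<lambda>g. msc (?s g) (mat_mult V (Rop \<rho> B) (\<rho> g))))) (msc ?c (msum ?P (\<lambda>g. msc (?s g) (msc (?s g) (Rop \<rho> B)))))"
    by (intro msc_cong msum_cong R_right[OF B])
  have f3: "msc ?c (msum ?P (\<lambda>g. msc (?s g) (msc (?s g) (Rop \<rho> B)))) = Rop \<rho> B"
  proof -
    have sq: "\<And>g. g \<in> ?P \<Longrightarrow> ?s g * ?s g = 1" using sgn_sq[OF B] by (simp flip: of_real_mult)
    have "(\<Sum>g\<in>?P. ?s g * (?s g * Rop \<rho> B u v)) = (\<Sum>g\<in>?P. Rop \<rho> B u v)" for u v
      using sq by (intro sum.cong) (auto simp: mult.assoc[symmetric])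
    then show ?thesis unfolding msc_def msum_def using cardP[OF B] by (auto intro!: ext)
  qed
  show ?thesis using f1 f2 f3 by simp
qed

lemma R_zero:
  assumes A: "A \<subseteq> \<Delta>" and a: "a \<in> A" and u: "u \<in> V" and v: "v \<in> V" and na: "a \<notin> \<tau> u"
  shows "Rop \<rho> A u v = 0"
proof -
  have m1: "mat_mult V (wg_gen m \<tau> a) (Rop \<rho> A) u v = Rop \<rho> A u v"
    by (rule mm_row_id[OF finV u]) (simp add: gen_row[where \<beta>=a and \<tau>=\<tau> and v=u, OF na])
  have aD: "a \<in> \<Delta>" using A a by blast
  have "mat_eq_on V (mat_mult V (wg_gen m \<tau> a) (Rop \<rho> A)) (mat_mult V (\<rho> (refl a)) (Rop \<rho> A))"
    by (rule mm_cong[OF meq_sym[OF rho_gen[OF aD]] meq_refl])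
  moreover have "mat_eq_on V (mat_mult V (\<rho> (refl a)) (Rop \<rho> A)) (msc (of_real (sgnW (refl a))) (Rop \<rho> A))"
    by (rule R_left[OF A refl_in[OF a]])
  ultimately have "mat_mult V (wg_gen m \<tau> a) (Rop \<rho> A) u v = - Rop \<rho> A u v"
    using sgn_refl[OF aD] u v unfolding mat_eq_on_def msc_def by simp
  then show ?thesis using m1 by simp
qed

lemma Q_zero:
  assumes K: "K \<subseteq> \<Delta>" and b: "b \<in> K" and u: "u \<in> V" and w: "w \<in> V" and bt: "b \<in> \<tau> w"
  shows "Qop \<rho> K u w = 0"
proof -
  have m1: "mat_mult V (Qop \<rho> K) (wg_gen m \<tau> b) u w = - Qop \<rho> K u w"
    by (rule mm_col_neg[OF finV w]) (simp add: gen_col[where \<beta>=b and \<tau>=\<tau> and w=w, OF bt])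
  have bD: "b \<in> \<Delta>" using K b by blast
  have "mat_eq_on V (mat_mult V (Qop \<rho> K) (wg_gen m \<tau> b)) (mat_mult V (Qop \<rho> K) (\<rho> (refl b)))"
    by (rule mm_cong[OF meq_refl meq_sym[OF rho_gen[OF bD]]])
  moreover have "mat_eq_on V (mat_mult V (Qop \<rho> K) (\<rho> (refl b))) (Qop \<rho> K)"
    by (rule Q_right[OF K refl_in[OF b]])
  ultimately have "mat_mult V (Qop \<rho> K) (wg_gen m \<tau> b) u w = Qop \<rho> K u w"
    using u w unfolding mat_eq_on_def by simp
  then show ?thesis using m1 by simp
qed

lemma QR_diag:
  assumes A: "A \<subseteq> \<Delta>" and v: "v \<in> V" "\<tau> v = A"
  shows "mat_mult V (Qop \<rho> (\<Delta> - A)) (Rop \<rho> A) v v = 1"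
proof -
  have "mat_mult V (Qop \<rho> (\<Delta> - A)) (Rop \<rho> A) v v = Rop \<rho> A v v"
    by (rule mm_row_id[OF finV v(1)]) (rule Q_id, use v in auto)
  also have "\<dots> = 1" using R_id[OF A v(1) _ v(1)] v by (simp add: mat_id_def)
  finally show ?thesis .
qed

lemma QR_nonzero_imp:
  assumes A: "A \<subseteq> \<Delta>" and u: "u \<in> V" and v: "v \<in> V"
    and nz: "mat_mult V (Qop \<rho> (\<Delta> - A)) (Rop \<rho> A) u v \<noteq> 0"
  shows "\<exists>w\<in>V. \<tau> w = A"
proof -
  obtain w where w: "w \<in> V" "Qop \<rho> (\<Delta> - A) u w * Rop \<rho> A w v \<noteq> 0"
    using nz unfolding mat_mult_def by (meson sum.not_neutral_contains_not_neutral)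
  have "A \<subseteq> \<tau> w"
  proof
    fix a assume "a \<in> A"
    then show "a \<in> \<tau> w" using R_zero[OF A _ w(1) v] w(2) by fastforce
  qed
  moreover have "\<tau> w \<subseteq> A"
  proof
    fix b assume b: "b \<in> \<tau> w"
    then have "b \<in> \<Delta>" using tauD[OF w(1)] by blast
    moreover have "b \<notin> \<Delta> - A" using Q_zero[of "\<Delta> - A" b u w] u w b by fastforce
    ultimately show "b \<in> A" by blast
  qed
  ultimately show ?thesis using w(1) by blast
qed

end

lemma sum_swap3: "(\<Sum>u\<in>U. \<Sum>w\<in>W. \<Sum>y\<in>Y. f u w y) = (\<Sum>y\<in>Y. \<Sum>u\<in>U. \<Sum>w\<in>W. f u w y)"
proof -
  have "(\<Sum>u\<in>U. \<Sum>w\<in>W. \<Sum>y\<in>Y. f u w y) = (\<Sum>u\<in>U. \<Sum>y\<in>Y. \<Sum>w\<in>W. f u w y)"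
    by (rule sum.cong[OF refl]) (rule sum.swap)
  also have "\<dots> = (\<Sum>y\<in>Y. \<Sum>u\<in>U. \<Sum>w\<in>W. f u w y)" by (rule sum.swap)
  finally show ?thesis .
qed

lemma gip_msum: "gip V (msum G f) x y = (\<Sum>g\<in>G. gip V (f g) x y)"
proof -
  have "gip V (msum G f) x y = (\<Sum>u\<in>V. \<Sum>w\<in>V. \<Sum>g\<in>G. cnj (x u) * f g u w * y w)"
    unfolding gip_def msum_def by (simp add: sum_distrib_left sum_distrib_right)
  also have "\<dots> = (\<Sum>g\<in>G. gip V (f g) x y)" unfolding gip_def by (rule sum_swap3)
  finally show ?thesis .
qed

lemma gip_gram: "gip V (mat_mult V (madj M) M) x x = (\<Sum>y\<in>V. cnj (\<Sum>w\<in>V. M y w * x w) * (\<Sum>w\<in>V. M y w * x w))"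
proof -
  have "gip V (mat_mult V (madj M) M) x x = (\<Sum>u\<in>V. \<Sum>w\<in>V. \<Sum>y\<in>V. cnj (M y u * x u) * (M y w * x w))"
    unfolding gip_def mat_mult_def madj_def
    by (simp add: sum_distrib_left sum_distrib_right mult.commute mult.left_commute)
  also have "\<dots> = (\<Sum>y\<in>V. \<Sum>u\<in>V. \<Sum>w\<in>V. cnj (M y u * x u) * (M y w * x w))" by (rule sum_swap3)
  also have "\<dots> = (\<Sum>y\<in>V. cnj (\<Sum>w\<in>V. M y w * x w) * (\<Sum>w\<in>V. M y w * x w))"
    by (simp add: sum_product)
  finally show ?thesis .
qed

context wgl begin

definition Hm where "Hm = msum (refl_group \<Delta>) (\<lambda>g. mat_mult V (madj (\<rho> g)) (\<rho> g))"

lemma Hm_herm: "u \<in> V \<Longrightarrow> w \<in> V \<Longrightarrow> Hm w u = cnj (Hm u w)"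
  unfolding Hm_def msum_def mat_mult_def madj_def by (simp add: mult.commute)

lemma Hm_pos:
  assumes ex: "\<exists>u\<in>V. x u \<noteq> 0"
  shows "Im (gip V Hm x x) = 0 \<and> Re (gip V Hm x x) > 0"
proof -
  let ?G = "refl_group \<Delta>"
  define z where "z g y = (\<Sum>w\<in>V. \<rho> g y w * x w)" for g y
  have eq: "gip V Hm x x = (\<Sum>g\<in>?G. \<Sum>y\<in>V. cnj (z g y) * z g y)"
    unfolding Hm_def gip_msum gip_gram z_def ..
  have t: "cnj (z g y) * z g y = complex_of_real ((cmod (z g y))\<^sup>2)" for g y
    using complex_norm_square[of "z g y"] by (simp add: mult.commute)
  have im: "Im (gip V Hm x x) = 0" unfolding eq t by simp
  have re: "Re (gip V Hm x x) = (\<Sum>g\<in>?G. \<Sum>y\<in>V. (cmod (z g y))\<^sup>2)" unfolding eq t by simp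
  obtain u0 where u0: "u0 \<in> V" "x u0 \<noteq> 0" using ex by blast
  have zid: "z id u0 = x u0"
  proof -
    have "z id u0 = (\<Sum>w\<in>V. mat_id u0 w * x w)"
      unfolding z_def using rho_id u0(1) unfolding mat_eq_on_def by (intro sum.cong) auto
    also have "\<dots> = x u0" using finV u0(1) by (simp add: mat_id_def if_distrib[of "\<lambda>a. a * _"] cong: if_cong)
    finally show ?thesis .
  qed
  have finG: "finite ?G" using finP by blast
  have nn: "0 \<le> (\<Sum>y\<in>V. (cmod (z g y))\<^sup>2)" for g by (simp add: sum_nonneg)
  have "Re (gip V Hm x x) \<noteq> 0"
  proof
    assume "Re (gip V Hm x x) = 0"
    then have "\<forall>g\<in>?G. (\<Sum>y\<in>V. (cmod (z g y))\<^sup>2) = 0"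
      unfolding re using sum_nonneg_eq_0_iff[OF finG, of "\<lambda>g. \<Sum>y\<in>V. (cmod (z g y))\<^sup>2"] nn by simp
    then have "(\<Sum>y\<in>V. (cmod (z id y))\<^sup>2) = 0" using refl_group.id_in by blast
    then have "(cmod (z id u0))\<^sup>2 = 0" using sum_nonneg_eq_0_iff[OF finV, of "\<lambda>y. (cmod (z id y))\<^sup>2"] u0(1) by simp
    then show False using zid u0(2) by simp
  qed
  moreover have "Re (gip V Hm x x) \<ge> 0" unfolding re by (intro sum_nonneg) simp
  ultimately show ?thesis using im by simp
qed

lemma Hm_inv:
  assumes h: "h \<in> refl_group \<Delta>"
  shows "mat_eq_on V (mat_mult V (madj (\<rho> h)) (mat_mult V Hm (\<rho> h))) Hm"
proof -
  let ?G = "refl_group \<Delta>"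
  have "mat_mult V (madj (\<rho> h)) (mat_mult V Hm (\<rho> h))
      = msum ?G (\<lambda>g. mat_mult V (madj (mat_mult V (\<rho> g) (\<rho> h))) (mat_mult V (\<rho> g) (\<rho> h)))"
    unfolding Hm_def mm_sum_left mm_sum_right madj_mm by (simp add: mm_assoc)
  moreover have "mat_eq_on V (msum ?G (\<lambda>g. mat_mult V (madj (mat_mult V (\<rho> g) (\<rho> h))) (mat_mult V (\<rho> g) (\<rho> h))))
      (msum ?G (\<lambda>g. mat_mult V (madj (\<rho> (g \<circ> h))) (\<rho> (g \<circ> h))))"
    by (intro msum_cong mm_cong madj_cong meq_sym[OF rho_comp] PW[OF order_refl] h)
  moreover have "msum ?G (\<lambda>g. mat_mult V (madj (\<rho> (g \<circ> h))) (\<rho> (g \<circ> h))) = Hm"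
    unfolding Hm_def using msum_reindex[OF bij_right[OF order_refl h], of "\<lambda>g. mat_mult V (madj (\<rho> g)) (\<rho> g)"] by simp
  ultimately show ?thesis by simp
qed

lemma Hm_adj:
  assumes h: "h \<in> refl_group \<Delta>"
  shows "mat_eq_on V (mat_mult V (madj (\<rho> h)) Hm) (mat_mult V Hm (\<rho> (inv h)))"
proof -
  have hW: "h \<in> refl_group \<Phi>" and ihW: "inv h \<in> refl_group \<Phi>"
    using PW[OF order_refl] h inv_props(1)[OF order_refl h] by auto
  have "mat_eq_on V (mat_mult V (\<rho> h) (\<rho> (inv h))) mat_id"
    using meq_trans[OF meq_sym[OF rho_comp[OF hW ihW]]] inv_props(3)[OF order_refl h] rho_id by simp
  then have i1: "mat_eq_on V Hm (mat_mult V Hm (mat_mult V (\<rho> h) (\<rho> (inv h))))"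
    by (meson meq_sym meq_trans mm_cong meq_refl mm_id_right finV)
  have "mat_eq_on V (mat_mult V (madj (\<rho> h)) Hm) (mat_mult V (madj (\<rho> h)) (mat_mult V Hm (mat_mult V (\<rho> h) (\<rho> (inv h)))))"
    by (rule mm_cong[OF meq_refl i1])
  moreover have "mat_mult V (madj (\<rho> h)) (mat_mult V Hm (mat_mult V (\<rho> h) (\<rho> (inv h))))
     = mat_mult V (mat_mult V (madj (\<rho> h)) (mat_mult V Hm (\<rho> h))) (\<rho> (inv h))"
    by (simp add: mm_assoc)
  moreover have "mat_eq_on V (mat_mult V (mat_mult V (madj (\<rho> h)) (mat_mult V Hm (\<rho> h))) (\<rho> (inv h))) (mat_mult V Hm (\<rho> (inv h)))"
    by (rule mm_cong[OF Hm_inv[OF h] meq_refl])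
  ultimately show ?thesis by (metis meq_trans)
qed

end

context wgl begin

lemma P_sub_G: "B \<subseteq> \<Delta> \<Longrightarrow> g \<in> refl_group B \<Longrightarrow> g \<in> refl_group \<Delta>"
  using refl_group_mono by blast

lemma Q_adj:
  assumes B: "B \<subseteq> \<Delta>"
  shows "mat_eq_on V (mat_mult V (madj (Qop \<rho> B)) Hm) (mat_mult V Hm (Qop \<rho> B))"
proof -
  let ?P = "refl_group B" and ?c = "1 / of_nat (card (refl_group B)) :: complex"
  have cc: "cnj ?c = ?c" by simp
  have "mat_mult V (madj (Qop \<rho> B)) Hm = msc ?c (msum ?P (\<lambda>g. mat_mult V (madj (\<rho> g)) Hm))"
    unfolding Qform madj_sc madj_sum cc mm_sc_left mm_sum_left ..
  moreover have "mat_eq_on V (msc ?c (msum ?P (\<lambda>g. mat_mult V (madj (\<rho> g)) Hm))) (msc ?c (msum ?P (\<lambda>g. mat_mult V Hm (\<rho> (inv g)))))"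
    by (intro msc_cong msum_cong Hm_adj P_sub_G[OF B])
  moreover have "msum ?P (\<lambda>g. mat_mult V Hm (\<rho> (inv g))) = msum ?P (\<lambda>g. mat_mult V Hm (\<rho> g))"
    using msum_reindex[OF bij_inv[OF B], of "\<lambda>g. mat_mult V Hm (\<rho> g)"] by simp
  moreover have "mat_mult V Hm (Qop \<rho> B) = msc ?c (msum ?P (\<lambda>g. mat_mult V Hm (\<rho> g)))"
    unfolding Qform mm_sc_right mm_sum_right ..
  ultimately show ?thesis by simp
qed

lemma R_adj:
  assumes B: "B \<subseteq> \<Delta>"
  shows "mat_eq_on V (mat_mult V (madj (Rop \<rho> B)) Hm) (mat_mult V Hm (Rop \<rho> B))"
proof -
  let ?P = "refl_group B" and ?c = "1 / of_nat (card (refl_group B)) :: complex"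
  let ?s = "\<lambda>g. complex_of_real (sgnW g)"
  have cc: "cnj ?c = ?c" by simp
  have cs: "\<And>g. cnj (?s g) = ?s g" by simp
  have "mat_mult V (madj (Rop \<rho> B)) Hm = msc ?c (msum ?P (\<lambda>g. msc (?s g) (mat_mult V (madj (\<rho> g)) Hm)))"
    unfolding Rform madj_sc madj_sum cc cs mm_sc_left mm_sum_left ..
  moreover have "mat_eq_on V (msc ?c (msum ?P (\<lambda>g. msc (?s g) (mat_mult V (madj (\<rho> g)) Hm)))) (msc ?c (msum ?P (\<lambda>g. msc (?s g) (mat_mult V Hm (\<rho> (inv g))))))"
    by (intro msc_cong msum_cong Hm_adj P_sub_G[OF B])
  moreover have "msum ?P (\<lambda>g. msc (?s g) (mat_mult V Hm (\<rho> (inv g)))) = msum ?P (\<lambda>g. msc (?s g) (mat_mult V Hm (\<rho> g)))"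
  proof -
    have "msum ?P (\<lambda>g. msc (?s g) (mat_mult V Hm (\<rho> g))) = msum ?P (\<lambda>g. msc (?s (inv g)) (mat_mult V Hm (\<rho> (inv g))))"
      using msum_reindex[OF bij_inv[OF B], of "\<lambda>g. msc (?s g) (mat_mult V Hm (\<rho> g))"] by simp
    also have "\<dots> = msum ?P (\<lambda>g. msc (?s g) (mat_mult V Hm (\<rho> (inv g))))"
      unfolding msum_def using sgn_inv[OF B] by (auto intro!: ext sum.cong)
    finally show ?thesis by simp
  qed
  moreover have "mat_mult V Hm (Rop \<rho> B) = msc ?c (msum ?P (\<lambda>g. msc (?s g) (mat_mult V Hm (\<rho> g))))"
    unfolding Rform mm_sc_right mm_sum_right ..
  ultimately show ?thesis by simp
qed

lemma adj_push:
  assumes "mat_eq_on V (mat_mult V (madj M) Hm) (mat_mult V Hm M)"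
  shows "mat_eq_on V (mat_mult V Hm (mat_mult V M W)) (mat_mult V (madj M) (mat_mult V Hm W))"
proof -
  have "mat_mult V Hm (mat_mult V M W) = mat_mult V (mat_mult V Hm M) W" by (simp add: mm_assoc)
  moreover have "mat_eq_on V (mat_mult V (mat_mult V Hm M) W) (mat_mult V (mat_mult V (madj M) Hm) W)"
    by (rule mm_cong[OF meq_sym[OF assms] meq_refl])
  moreover have "mat_mult V (mat_mult V (madj M) Hm) W = mat_mult V (madj M) (mat_mult V Hm W)" by (simp add: mm_assoc)
  ultimately show ?thesis by simp
qed

lemma trace_pos:
  assumes A: "A \<subseteq> \<Delta>" and v: "v \<in> V" "\<tau> v = A"
  shows "mat_trace V (mat_mult V (Qop \<rho> (\<Delta> - A)) (Rop \<rho> A)) \<noteq> 0"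
proof
  let ?Q = "Qop \<rho> (\<Delta> - A)" and ?R = "Rop \<rho> A"
  have K: "\<Delta> - A \<subseteq> \<Delta>" by blast
  assume tr0: "mat_trace V (mat_mult V ?Q ?R) = 0"
  obtain E where EE: "mat_eq_on V (mat_mult V E (mat_mult V (madj E) Hm)) mat_id"
    using frame_exists[OF finV Hm_herm Hm_pos] by blast
  define F where "F = mat_mult V (madj E) Hm"
  define Z where "Z = mat_mult V (mat_mult V ?Q ?R) E"
  define X where "X = mat_mult V ?R (mat_mult V (mat_mult V ?Q ?Q) ?R)"
  have t1: "mat_trace V (mat_mult V ?Q ?R) = mat_trace V (mat_mult V (mat_mult V ?Q ?Q) (mat_mult V ?R ?R))"
    by (rule trace_cong[OF mm_cong[OF meq_sym[OF Q_idem[OF K]] meq_sym[OF R_idem[OF A]]]])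
  have t2: "mat_trace V (mat_mult V (mat_mult V ?Q ?Q) (mat_mult V ?R ?R)) = mat_trace V X"
  proof -
    have "mat_mult V (mat_mult V ?Q ?Q) (mat_mult V ?R ?R) = mat_mult V (mat_mult V (mat_mult V ?Q ?Q) ?R) ?R"
      by (simp only: mm_assoc)
    then show ?thesis unfolding X_def by (simp only: trace_cyclic[of V _ ?R])
  qed
  have t3: "mat_trace V X = mat_trace V (mat_mult V X (mat_mult V E F))"
    unfolding F_def by (rule trace_cong[OF meq_sym[OF meq_trans[OF mm_cong[OF meq_refl EE] mm_id_right[OF finV]]]])
  have t4: "mat_trace V (mat_mult V X (mat_mult V E F)) = mat_trace V (mat_mult V (madj E) (mat_mult V Hm (mat_mult V X E)))"
  proof -
    have "mat_mult V X (mat_mult V E F) = mat_mult V (mat_mult V X E) F" by (simp only: mm_assoc)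
    moreover have "mat_trace V (mat_mult V (mat_mult V X E) F) = mat_trace V (mat_mult V F (mat_mult V X E))"
      by (rule trace_cyclic)
    moreover have "mat_mult V F (mat_mult V X E) = mat_mult V (madj E) (mat_mult V Hm (mat_mult V X E))"
      unfolding F_def by (simp only: mm_assoc)
    ultimately show ?thesis by simp
  qed
  have t5: "mat_eq_on V (mat_mult V (madj E) (mat_mult V Hm (mat_mult V X E))) (mat_mult V (madj Z) (mat_mult V Hm Z))"
  proof -
    have "mat_mult V X E = mat_mult V ?R (mat_mult V ?Q (mat_mult V ?Q (mat_mult V ?R E)))"
      unfolding X_def by (simp add: mm_assoc)
    moreover have a1: "mat_eq_on V (mat_mult V Hm (mat_mult V ?R (mat_mult V ?Q (mat_mult V ?Q (mat_mult V ?R E)))))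
        (mat_mult V (madj ?R) (mat_mult V Hm (mat_mult V ?Q (mat_mult V ?Q (mat_mult V ?R E)))))"
      by (rule adj_push[OF R_adj[OF A]])
    moreover have a2: "mat_eq_on V (mat_mult V Hm (mat_mult V ?Q (mat_mult V ?Q (mat_mult V ?R E))))
        (mat_mult V (madj ?Q) (mat_mult V Hm (mat_mult V ?Q (mat_mult V ?R E))))"
      by (rule adj_push[OF Q_adj[OF K]])
    moreover have "mat_mult V (madj Z) (mat_mult V Hm Z) = mat_mult V (madj E) (mat_mult V (madj ?R) (mat_mult V (madj ?Q) (mat_mult V Hm (mat_mult V ?Q (mat_mult V ?R E)))))"
      unfolding Z_def madj_mm by (simp add: mm_assoc)
    ultimately show ?thesis
      using meq_trans[OF mm_cong[OF meq_refl a1, of "madj E"] mm_cong[OF meq_refl mm_cong[OF meq_refl a2, of "madj ?R"], of "madj E"]]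
      by simp
  qed
  define col where "col j = (\<lambda>u. Z u j)" for j
  have diag: "mat_mult V (madj Z) (mat_mult V Hm Z) j j = gip V Hm (col j) (col j)" for j
    unfolding mat_mult_def madj_def gip_def col_def by (simp add: sum_distrib_left mult.assoc)
  have trsum: "mat_trace V (mat_mult V ?Q ?R) = (\<Sum>j\<in>V. gip V Hm (col j) (col j))"
    using t1 t2 t3 t4 trace_cong[OF t5] unfolding mat_trace_def diag by simp
  have gnn: "Im (gip V Hm (col j) (col j)) = 0 \<and> Re (gip V Hm (col j) (col j)) \<ge> 0" for j
  proof (cases "\<exists>u\<in>V. col j u \<noteq> 0")
    case True then show ?thesis using Hm_pos[OF True] by simp
  next
    case False then have "gip V Hm (col j) (col j) = 0" unfolding gip_def by simp
    then show ?thesis by simp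
  qed
  have "(\<Sum>j\<in>V. Re (gip V Hm (col j) (col j))) = 0" using tr0 trsum
    by (metis Re_sum zero_complex.sel(1))
  then have re0: "\<forall>j\<in>V. Re (gip V Hm (col j) (col j)) = 0"
    using sum_nonneg_eq_0_iff[OF finV, of "\<lambda>j. Re (gip V Hm (col j) (col j))"] gnn by simp
  have Z0: "\<forall>j\<in>V. \<forall>u\<in>V. Z u j = 0"
  proof (intro ballI, rule ccontr)
    fix j u assume j: "j \<in> V" and u: "u \<in> V" and nz: "Z u j \<noteq> 0"
    then have "Re (gip V Hm (col j) (col j)) > 0" using Hm_pos[of "col j"] by (auto simp: col_def)
    then show False using re0 j by simp
  qed
  have "mat_eq_on V (mat_mult V ?Q ?R) (mat_mult V Z F)"
  proof -
    have "mat_eq_on V (mat_mult V (mat_mult V ?Q ?R) (mat_mult V E F)) (mat_mult V ?Q ?R)"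
      unfolding F_def by (rule meq_trans[OF mm_cong[OF meq_refl EE] mm_id_right[OF finV]])
    then show ?thesis unfolding Z_def by (simp add: mm_assoc meq_sym)
  qed
  then have "mat_mult V ?Q ?R v v = mat_mult V Z F v v" using v unfolding mat_eq_on_def by blast
  also have "\<dots> = 0" unfolding mat_mult_def using Z0 v by simp
  finally show False using QR_diag[OF A v] by simp
qed

end

theorem theorem2p10:
  fixes \<Phi> \<Delta> A :: "(real^'n) set"
    and V :: "'v set" and m :: "'v \<Rightarrow> 'v \<Rightarrow> complex" and \<tau> :: "'v \<Rightarrow> (real^'n) set"
    and \<rho> :: "(real^'n \<Rightarrow> real^'n) \<Rightarrow> 'v \<Rightarrow> 'v \<Rightarrow> complex"
  assumes "root_system \<Phi>" and "simple_system \<Phi> \<Delta>"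
    and "weak_W_graph \<Phi> \<Delta> V m \<tau>"
    and "wg_rep \<Phi> \<Delta> V m \<tau> \<rho>"
    and "A \<subseteq> \<Delta>"
  shows "((\<exists>v\<in>V. \<tau> v = A) \<longleftrightarrow> mat_nonzero V (mat_mult V (Qop \<rho> (\<Delta> - A)) (Rop \<rho> A)))
       \<and> ((\<exists>v\<in>V. \<tau> v = A) \<longleftrightarrow> mat_trace V (mat_mult V (Qop \<rho> (\<Delta> - A)) (Rop \<rho> A)) \<noteq> 0)
       \<and> ((\<exists>v\<in>V. \<tau> v = A) \<longleftrightarrow> mat_trace V (mat_mult V (Rop \<rho> A) (Qop \<rho> (\<Delta> - A))) \<noteq> 0)"
proof -
  have finV: "finite V" and tD: "\<And>v. v \<in> V \<Longrightarrow> \<tau> v \<subseteq> \<Delta>"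
    using assms(3) unfolding weak_W_graph_def by blast+
  interpret wgl \<Phi> \<Delta> V m \<tau> \<rho>
    using assms(1,2,4) finV tD by (unfold_locales) auto
  let ?M = "mat_mult V (Qop \<rho> (\<Delta> - A)) (Rop \<rho> A)"
  have e1: "(\<exists>v\<in>V. \<tau> v = A) \<longleftrightarrow> mat_nonzero V ?M"
  proof
    assume "\<exists>v\<in>V. \<tau> v = A"
    then obtain v where v: "v \<in> V" "\<tau> v = A" by blast
    then show "mat_nonzero V ?M" unfolding mat_nonzero_def using QR_diag[OF assms(5) v] by force
  next
    assume "mat_nonzero V ?M"
    then obtain u v where "u \<in> V" "v \<in> V" "?M u v \<noteq> 0" unfolding mat_nonzero_def by blast
    then show "\<exists>v\<in>V. \<tau> v = A" using QR_nonzero_imp[OF assms(5)] by blast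
  qed
  have e2: "(\<exists>v\<in>V. \<tau> v = A) \<longleftrightarrow> mat_trace V ?M \<noteq> 0"
  proof
    assume "\<exists>v\<in>V. \<tau> v = A"
    then obtain v where v: "v \<in> V" "\<tau> v = A" by blast
    then show "mat_trace V ?M \<noteq> 0" using trace_pos[OF assms(5) v] by blast
  next
    assume "mat_trace V ?M \<noteq> 0"
    then obtain v where "v \<in> V" "?M v v \<noteq> 0" unfolding mat_trace_def
      by (meson sum.not_neutral_contains_not_neutral)
    then show "\<exists>v\<in>V. \<tau> v = A" using QR_nonzero_imp[OF assms(5)] by blast
  qed
  have e3: "mat_trace V (mat_mult V (Rop \<rho> A) (Qop \<rho> (\<Delta> - A))) = mat_trace V ?M"
    by (rule trace_cyclic)
  show ?thesis using e1 e2 e3 by simp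
qed

end
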